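(* Let $M$ be a topological space. (a) Every continuous function $f:M\to\mathbb{R}$ induces a strongly regular spectral family $E^f:\mathbb{R}\to\mathcal{T}(M)$ by $E^f_\lambda:=\mathrm{int}(f^{-1}(]-\infty,\lambda]))$; its admissible domain $\mathcal{D}(E^f)$ equals $M$, and the function $f_{E^f}:M\to\mathbb{R}$ induced by $E^f$ is $f$. (b) Conversely, if $E:\mathbb{R}\to\mathcal{T}(M)$ is a strongly regular spectral family, then the induced function $f_E:\mathcal{D}(E)\to\mathbb{R}$ is continuous, and the spectral family $E^{f_E}$ in $\mathcal{T}(\mathcal{D}(E))$ induced by $f_E$ (i.e. $E^{f_E}_\lambda=\mathrm{int}_{\mathcal{D}(E)}f_E^{-1}(]-\infty,\lambda])$) satisfies $E^{f_E}_\lambda=E_\lambda\cap\mathcal{D}(E)$ for all $\lambda\in\mathbb{R}$.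
   Context: $\mathcal{T}(M)$ is the lattice of open subsets of $M$, with $\bigvee_\alpha U_\alpha=\bigcup_\alpha U_\alpha$ and $\bigwedge_\alpha U_\alpha=\mathrm{int}\bigcap_\alpha U_\alpha$. A spectral family in $\mathcal{T}(M)$ is a map $E:\mathbb{R}\to\mathcal{T}(M)$ with $E_\lambda\subseteq E_\mu$ for $\lambda\le\mu$, $E_\lambda=\bigwedge_{\mu>\lambda}E_\mu$, $\bigwedge_\lambda E_\lambda=\emptyset$, $\bigcup_\lambda E_\lambda=M$. It is strongly regular if $\overline{E_\lambda}\subseteq E_\mu$ whenever $\lambda<\mu$. Its admissible domain is $\mathcal{D}(E)=\{x\in M\mid\exists\lambda:x\notin E_\lambda\}$ and its induced function is $f_E(x)=\inf\{\lambda\mid x\in E_\lambda\}$, $x\in\mathcal{D}(E)$. *)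

theory Defs
  imports "HOL-Analysis.Analysis"
begin

text \<open>Meet in the lattice of open sets of X: interior of the intersection
  (relative to the topological space X).\<close>
definition open_meet :: "'a topology \<Rightarrow> 'a set set \<Rightarrow> 'a set" where
  "open_meet X \<U> = X interior_of (topspace X \<inter> \<Inter>\<U>)"

definition spectral_family :: "'a topology \<Rightarrow> (real \<Rightarrow> 'a set) \<Rightarrow> bool" where
  "spectral_family X E \<longleftrightarrow>
     (\<forall>l. openin X (E l)) \<and>
     (\<forall>l m. l \<le> m \<longrightarrow> E l \<subseteq> E m) \<and>
     (\<forall>l. E l = open_meet X (E ` {l<..})) \<and>
     open_meet X (range E) = {} \<and>
     (\<Union>l. E l) = topspace X"

definition strongly_regular :: "'a topology \<Rightarrow> (real \<Rightarrow> 'a set) \<Rightarrow> bool" where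
  "strongly_regular X E \<longleftrightarrow> spectral_family X E \<and>
     (\<forall>l m. l < m \<longrightarrow> X closure_of (E l) \<subseteq> E m)"

definition admissible_domain :: "'a topology \<Rightarrow> (real \<Rightarrow> 'a set) \<Rightarrow> 'a set" where
  "admissible_domain X E = {x \<in> topspace X. \<exists>l. x \<notin> E l}"

text \<open>Induced function; only meaningful on the admissible domain.\<close>
definition induced_fun :: "(real \<Rightarrow> 'a set) \<Rightarrow> 'a \<Rightarrow> real" where
  "induced_fun E x = Inf {l. x \<in> E l}"

definition fun_spectral :: "'a topology \<Rightarrow> ('a \<Rightarrow> real) \<Rightarrow> real \<Rightarrow> 'a set" where
  "fun_spectral X f l = X interior_of {x \<in> topspace X. f x \<le> l}"

end

theory Submission
  imports Defs
begin

lemma partA: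
  fixes X :: "'a topology"
  assumes cf: "continuous_map X euclideanreal f"
  shows "strongly_regular X (fun_spectral X f) \<and>
            admissible_domain X (fun_spectral X f) = topspace X \<and>
            (\<forall>x \<in> topspace X. induced_fun (fun_spectral X f) x = f x)"
proof -
  define F where "F = fun_spectral X f"
  have olt: "\<And>a. openin X {x \<in> topspace X. f x < a}"
    using cf continuous_map_upper_lower_semicontinuous_lt by blast
  have cle: "\<And>a. closedin X {x \<in> topspace X. f x \<le> a}"
    using cf continuous_map_upper_lower_semicontinuous_le by blast
  have Fsub: "\<And>l. F l \<subseteq> {x \<in> topspace X. f x \<le> l}"
    unfolding F_def fun_spectral_def by (rule interior_of_subset)
  have Fsup: "\<And>l. {x \<in> topspace X. f x < l} \<subseteq> F l"
    unfolding F_def fun_spectral_def by (rule interior_of_maximal) (auto simp: olt)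
  have Fopen: "\<And>l. openin X (F l)" unfolding F_def fun_spectral_def by simp
  have mem1: "\<And>x l. x \<in> F l \<Longrightarrow> f x \<le> l" using Fsub by blast
  have mem2: "\<And>x l. x \<in> topspace X \<Longrightarrow> f x < l \<Longrightarrow> x \<in> F l" using Fsup by blast
  have mono: "\<And>l m. l \<le> m \<Longrightarrow> F l \<subseteq> F m"
    unfolding F_def fun_spectral_def by (rule interior_of_mono) auto
  have meet: "F l = open_meet X (F ` {l<..})" for l
  proof -
    have "topspace X \<inter> \<Inter>(F ` {l<..}) = {x \<in> topspace X. f x \<le> l}"
    proof
      show "topspace X \<inter> \<Inter>(F ` {l<..}) \<subseteq> {x \<in> topspace X. f x \<le> l}"
      proof
        fix x assume x: "x \<in> topspace X \<inter> \<Inter>(F ` {l<..})"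
        have "f x \<le> l"
        proof (rule dense_ge)
          fix y assume "l < y" then have "x \<in> F y" using x by auto
          then show "f x \<le> y" by (rule mem1)
        qed
        then show "x \<in> {x \<in> topspace X. f x \<le> l}" using x by auto
      qed
      show "{x \<in> topspace X. f x \<le> l} \<subseteq> topspace X \<inter> \<Inter>(F ` {l<..})"
        using mem2 by fastforce
    qed
    then show ?thesis unfolding open_meet_def F_def fun_spectral_def by simp
  qed
  have bot: "open_meet X (range F) = {}"
  proof -
    have "topspace X \<inter> \<Inter>(range F) = {}"
    proof (rule ccontr)
      assume "topspace X \<inter> \<Inter>(range F) \<noteq> {}"
      then obtain x where "x \<in> F (f x - 1)" by auto
      then show False using mem1 by fastforce
    qed
    then show ?thesis unfolding open_meet_def by simp
  qed
  have un: "(\<Union>l. F l) = topspace X"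
  proof
    show "(\<Union>l. F l) \<subseteq> topspace X" using Fopen openin_subset by blast
    show "topspace X \<subseteq> (\<Union>l. F l)"
    proof
      fix x assume "x \<in> topspace X"
      then have "x \<in> F (f x + 1)" using mem2 by simp
      then show "x \<in> (\<Union>l. F l)" by blast
    qed
  qed
  have sr: "X closure_of (F l) \<subseteq> F m" if "l < m" for l m
  proof -
    have "X closure_of (F l) \<subseteq> {x \<in> topspace X. f x \<le> l}"
      by (rule closure_of_minimal[OF Fsub cle])
    also have "\<dots> \<subseteq> F m" using mem2 that by force
    finally show ?thesis .
  qed
  have "strongly_regular X F"
    unfolding strongly_regular_def spectral_family_def
    using Fopen mono meet bot un sr by blast
  moreover have "admissible_domain X F = topspace X"
    unfolding admissible_domain_def
  proof safe
    fix x assume "x \<in> topspace X"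
    have "x \<notin> F (f x - 1)" using mem1 by fastforce
    then show "\<exists>l. x \<notin> F l" by blast
  qed
  moreover have "induced_fun F x = f x" if x: "x \<in> topspace X" for x
  proof -
    have ne: "{l. x \<in> F l} \<noteq> {}" using mem2[OF x, of "f x + 1"] by auto
    have bdd: "bdd_below {l. x \<in> F l}" unfolding bdd_below_def using mem1 by blast
    have "f x \<le> Inf {l. x \<in> F l}" by (rule cInf_greatest[OF ne]) (auto intro: mem1)
    moreover have "Inf {l. x \<in> F l} \<le> f x"
    proof (rule dense_ge)
      fix y assume "f x < y"
      then have "x \<in> F y" using mem2 x by blast
      then show "Inf {l. x \<in> F l} \<le> y" by (intro cInf_lower bdd) simp
    qed
    ultimately show ?thesis unfolding induced_fun_def by simp
  qed
  ultimately show ?thesis unfolding F_def by blast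
qed

lemma partB:
  fixes X :: "'a topology"
  assumes sr: "strongly_regular X E"
  shows "continuous_map (subtopology X (admissible_domain X E)) euclideanreal (induced_fun E) \<and>
            (\<forall>l. fun_spectral (subtopology X (admissible_domain X E)) (induced_fun E) l
                   = E l \<inter> admissible_domain X E)"
proof -
  define D where "D = admissible_domain X E"
  define f where "f = induced_fun E"
  have SF: "spectral_family X E" using sr unfolding strongly_regular_def by simp
  have cl: "\<And>l m. l < m \<Longrightarrow> X closure_of (E l) \<subseteq> E m"
    using sr unfolding strongly_regular_def by simp
  note SF' = SF[unfolded spectral_family_def]
  have Eopen: "\<And>l. openin X (E l)" using conjunct1[OF SF'] by (rule spec)
  have mono: "\<And>l m. l \<le> m \<Longrightarrow> E l \<subseteq> E m"
    using conjunct1[OF conjunct2[OF SF']] by blast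
  have meet: "\<And>l. E l = open_meet X (E ` {l<..})"
    using conjunct1[OF conjunct2[OF conjunct2[OF SF']]] by (rule spec)
  have un: "(\<Union>l. E l) = topspace X"
    using conjunct2[OF conjunct2[OF conjunct2[OF conjunct2[OF SF']]]] .
  have Dtop: "D \<subseteq> topspace X" unfolding D_def admissible_domain_def by auto
  have Esub: "\<And>l. E l \<subseteq> X closure_of (E l)"
    by (rule closure_of_subset[OF openin_subset[OF Eopen]])
  have Dopen: "openin X D"
  proof (subst openin_subopen, intro ballI)
    fix x assume x: "x \<in> D"
    then obtain l where l: "x \<notin> E l" unfolding D_def admissible_domain_def by auto
    have "x \<notin> X closure_of (E (l - 1))" using cl[of "l - 1" l] l by auto
    moreover have "topspace X - X closure_of (E (l - 1)) \<subseteq> D"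
      unfolding D_def admissible_domain_def using Esub by fastforce
    moreover have "openin X (topspace X - X closure_of (E (l - 1)))"
      by (intro openin_diff openin_topspace closedin_closure_of)
    ultimately show "\<exists>T. openin X T \<and> x \<in> T \<and> T \<subseteq> D" using x Dtop by blast
  qed
  have facts: "(x \<in> E l \<longrightarrow> f x \<le> l) \<and> (f x < l \<longrightarrow> x \<in> E l) \<and> (x \<notin> E l \<longrightarrow> l \<le> f x)"
    if x: "x \<in> D" for x l
  proof -
    obtain l0 where l0: "x \<notin> E l0" using x unfolding D_def admissible_domain_def by auto
    have ne: "{l. x \<in> E l} \<noteq> {}" using x Dtop un by auto
    have lb: "l0 \<le> m" if "x \<in> E m" for m
    proof (rule ccontr)
      assume "\<not> l0 \<le> m" then have "E m \<subseteq> E l0" using mono by simp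
      then show False using that l0 by auto
    qed
    have bdd: "bdd_below {l. x \<in> E l}" unfolding bdd_below_def using lb by blast
    have i: "x \<in> E l \<longrightarrow> f x \<le> l" unfolding f_def induced_fun_def
      using cInf_lower[OF _ bdd] by simp
    have ii: "f x < l \<longrightarrow> x \<in> E l"
    proof
      assume "f x < l"
      then obtain m where "x \<in> E m" "m < l" unfolding f_def induced_fun_def
        using cInf_less_iff[OF ne bdd] by auto
      then show "x \<in> E l" using mono[of m l] by auto
    qed
    have iii: "x \<notin> E l \<longrightarrow> l \<le> f x"
    proof
      assume nl: "x \<notin> E l"
      show "l \<le> f x" unfolding f_def induced_fun_def
      proof (rule cInf_greatest[OF ne])
        fix m assume "m \<in> {l. x \<in> E l}"
        then show "l \<le> m" using nl mono[of m l] by (cases "m \<le> l") auto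
      qed
    qed
    show ?thesis using i ii iii by blast
  qed
  have topD: "topspace (subtopology X D) = D" using Dtop by auto
  have sub_open: "openin (subtopology X D) S" if "openin X S" "S \<subseteq> D" for S
    using openin_open_subtopology[OF Dopen] that by blast
  have cont: "continuous_map (subtopology X D) euclideanreal f"
    unfolding continuous_map_upper_lower_semicontinuous_lt topD
  proof (intro conjI allI sub_open)
    fix a
    show "openin X {x \<in> D. a < f x}"
    proof (subst openin_subopen, intro ballI)
      fix x assume "x \<in> {x \<in> D. a < f x}"
      then have x: "x \<in> D" "a < f x" by auto
      define l where "l = (a + f x) / 2"
      define c where "c = (a + l) / 2"
      have "x \<notin> E l" using facts[OF x(1), of l] x(2) unfolding l_def by auto
      then have nx: "x \<notin> X closure_of (E c)" using cl[of c l] x(2) unfolding c_def l_def by auto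
      have "openin X (D - X closure_of (E c))"
        by (intro openin_diff Dopen closedin_closure_of)
      moreover have "D - X closure_of (E c) \<subseteq> {x \<in> D. a < f x}"
      proof
        fix y assume y: "y \<in> D - X closure_of (E c)"
        then have "y \<notin> E c" using Esub by blast
        then have "c \<le> f y" using facts[of y c] y by auto
        moreover have "a < c" using x(2) unfolding c_def l_def by simp
        ultimately show "y \<in> {x \<in> D. a < f x}" using y by auto
      qed
      ultimately show "\<exists>T. openin X T \<and> x \<in> T \<and> T \<subseteq> {x \<in> D. a < f x}"
        using x nx by blast
    qed
    show "openin X {x \<in> D. f x < a}"
    proof (subst openin_subopen, intro ballI)
      fix x assume "x \<in> {x \<in> D. f x < a}"
      then have x: "x \<in> D" "f x < a" by auto
      define l where "l = (a + f x) / 2"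
      have "x \<in> E l" using facts[OF x(1), of l] x(2) unfolding l_def by auto
      moreover have "openin X (E l \<inter> D)" by (intro openin_Int Dopen Eopen)
      moreover have "E l \<inter> D \<subseteq> {x \<in> D. f x < a}"
      proof
        fix y assume y: "y \<in> E l \<inter> D"
        then have "f y \<le> l" using facts[of y l] by auto
        then show "y \<in> {x \<in> D. f x < a}" using y x(2) unfolding l_def by auto
      qed
      ultimately show "\<exists>T. openin X T \<and> x \<in> T \<and> T \<subseteq> {x \<in> D. f x < a}"
        using x by blast
    qed
  qed auto
  have spec: "fun_spectral (subtopology X D) f l = E l \<inter> D" for l
  proof -
    have eq: "fun_spectral (subtopology X D) f l = D \<inter> X interior_of {x \<in> D. f x \<le> l}"
      unfolding fun_spectral_def topD by (rule interior_of_subtopology_open[OF Dopen])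
    have "X interior_of {x \<in> D. f x \<le> l} \<subseteq> X interior_of (topspace X \<inter> \<Inter>(E ` {l<..}))"
    proof (rule interior_of_mono, rule subsetI)
      fix x assume xm: "x \<in> {x \<in> D. f x \<le> l}"
      have "x \<in> E m" if "m \<in> {l<..}" for m
        using facts[of x m] xm that by auto
      then show "x \<in> topspace X \<inter> \<Inter>(E ` {l<..})" using xm Dtop by auto
    qed
    also have "\<dots> = E l" using meet[of l] unfolding open_meet_def by simp
    finally have s1: "X interior_of {x \<in> D. f x \<le> l} \<subseteq> E l" .
    have s2: "E l \<inter> D \<subseteq> X interior_of {x \<in> D. f x \<le> l}"
    proof (rule interior_of_maximal)
      show "E l \<inter> D \<subseteq> {x \<in> D. f x \<le> l}" using facts by auto
      show "openin X (E l \<inter> D)" by (intro openin_Int Dopen Eopen)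
    qed
    show ?thesis unfolding eq using s1 s2 by blast
  qed
  show ?thesis using cont spec unfolding D_def f_def by blast
qed

theorem theorem2p35:
  fixes X :: "'a topology"
  shows "(\<forall>f. continuous_map X euclideanreal f \<longrightarrow>
            strongly_regular X (fun_spectral X f) \<and>
            admissible_domain X (fun_spectral X f) = topspace X \<and>
            (\<forall>x \<in> topspace X. induced_fun (fun_spectral X f) x = f x))
       \<and> (\<forall>E. strongly_regular X E \<longrightarrow>
            continuous_map (subtopology X (admissible_domain X E)) euclideanreal (induced_fun E) \<and>
            (\<forall>l. fun_spectral (subtopology X (admissible_domain X E)) (induced_fun E) l
                   = E l \<inter> admissible_domain X E))"
  apply (rule conjI)
   apply (rule allI, rule impI, erule partA)
  apply (rule allI, rule impI, erule partB)
  done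

end
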